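(* Fix integers $s_l,s_h\ge1$ and let $N=s_ls_h$. For parameters $p_h\ge p_l\ge0$, let the three-layer hierarchical random graph $\mathcal{G}$ have co-occurrence (adjacency) matrix $P\in\mathbb{R}^{N\times N}$ obtained by partitioning the $N$ vertices into $s_l$ groups of $s_h$ consecutive vertices and setting $P_{ij}=p_h$ if $i,j$ lie in the same group and $P_{ij}=p_l$ otherwise, with the entries normalized to sum to one. Let $\mathcal{G}'$ be another such graph with the same $s_l,s_h$ and parameters $p_h'\ge p_l'\ge0$ (entries also summing to one). If $p_h-p_l\le p_h'-p_l'$, then for every $t$, $\sigma_t\le\sigma_t'$, where $\sigma_t,\sigma_t'$ denote the $t$-th largest singular values of the co-occurrence matrices of $\mathcal{G}$ and $\mathcal{G}'$, respectively.
   Context: In a hierarchical random graph, the leaves of a hierarchical tree are the graph's vertices and the probability of an edge between two vertices is the probability attached to their lowest common ancestor; here the tree has two hidden layers, with $p_l$ the (high-level) connection probability across groups and $p_h$ the (lower-level) connection probability within a group. *)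

theory Defs
  imports "Jordan_Normal_Form.Char_Poly"
begin

text \<open>Since A^T A is symmetric positive semidefinite, its characteristic polynomial
splits over the reals with nonnegative roots.\<close>
definition singular_values :: "real mat \<Rightarrow> real list" where
  "singular_values A =
     map sqrt (rev (sorted_list_of_multiset
       (proots (char_poly (transpose_mat A * A)))))"

definition sigma :: "real mat \<Rightarrow> nat \<Rightarrow> real" where
  "sigma A t = singular_values A ! (t - 1)"

definition hrg_matrix :: "nat \<Rightarrow> nat \<Rightarrow> real \<Rightarrow> real \<Rightarrow> real mat" where
  "hrg_matrix s_l s_h p_h p_l =
     mat (s_l * s_h) (s_l * s_h)
       (\<lambda>(i, j). if i div s_h = j div s_h then p_h else p_l)"

definition entry_sum :: "real mat \<Rightarrow> real" where
  "entry_sum A = (\<Sum>i<dim_row A. \<Sum>j<dim_col A. A $$ (i, j))"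

end

theory Submission
  imports Defs
begin

lemma sylvester_char_poly:
  fixes F :: "'a :: idom mat"
  assumes F: "F \<in> carrier_mat n m" and K: "K \<in> carrier_mat m n"
  shows "[:0,1:]^m * char_poly (F * K) = [:0,1:]^n * char_poly (K * F)"
proof -
  let ?X = "[:0,1:] :: 'a poly"
  define F' where "F' = map_mat (\<lambda>a. [:a:]) F"
  define K' where "K' = map_mat (\<lambda>a. [:a:]) K"
  define Fm where "Fm = map_mat (\<lambda>a. [:-a:]) F"
  define Km where "Km = map_mat (\<lambda>a. [:-a:]) K"
  have cF': "F' \<in> carrier_mat n m" "Fm \<in> carrier_mat n m" using F by (auto simp: F'_def Fm_def)
  have cK': "K' \<in> carrier_mat m n" "Km \<in> carrier_mat m n" using K by (auto simp: K'_def Km_def)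
  define M where "M = four_block_mat (?X \<cdot>\<^sub>m 1\<^sub>m n) F' K' (1\<^sub>m m)"
  define L1 where "L1 = four_block_mat (1\<^sub>m n) Fm (0\<^sub>m m n) (1\<^sub>m m)"
  define L2 where "L2 = four_block_mat (1\<^sub>m n) (0\<^sub>m n m) Km (?X \<cdot>\<^sub>m 1\<^sub>m m)"
  have cM: "M \<in> carrier_mat (n+m) (n+m)" unfolding M_def using cF' cK' by auto
  have cL1: "L1 \<in> carrier_mat (n+m) (n+m)" unfolding L1_def using cF' cK' by auto
  have cL2: "L2 \<in> carrier_mat (n+m) (n+m)" unfolding L2_def using cF' cK' by auto
  have dL1: "det L1 = 1"
    unfolding L1_def by (subst det_four_block_mat_lower_left_zero[of _ n _ m], insert cF', auto)
  have dL2: "det L2 = ?X ^ m"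
    unfolding L2_def by (subst det_four_block_mat_upper_right_zero[of _ n _ m], insert cK', auto)
  have FK1: "Fm * K' = map_mat (\<lambda>a. [:-a:]) (F * K)"
  proof -
    have "map_mat (\<lambda>a. [:a:] * [:-1:]) (F * K) = map_mat (\<lambda>a. [:a:] * [:-1:]) F * map_mat (\<lambda>a. [:a:]) K"
      by (rule map_poly_mult(2)[OF F K])
    moreover have "(\<lambda>a. [:a:] * [:-1:]) = (\<lambda>a::'a. [:-a:])" by (auto simp: fun_eq_iff)
    ultimately show ?thesis by (simp add: Fm_def K'_def)
  qed
  have KF1: "Km * F' = map_mat (\<lambda>a. [:-a:]) (K * F)"
  proof -
    have "map_mat (\<lambda>a. [:a:] * [:-1:]) (K * F) = map_mat (\<lambda>a. [:a:] * [:-1:]) K * map_mat (\<lambda>a. [:a:]) F"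
      by (rule map_poly_mult(2)[OF K F])
    moreover have "(\<lambda>a. [:a:] * [:-1:]) = (\<lambda>a::'a. [:-a:])" by (auto simp: fun_eq_iff)
    ultimately show ?thesis by (simp add: Km_def F'_def)
  qed
  have "L1 * M = four_block_mat (1\<^sub>m n * (?X \<cdot>\<^sub>m 1\<^sub>m n) + Fm * K') (1\<^sub>m n * F' + Fm * 1\<^sub>m m)
      (0\<^sub>m m n * (?X \<cdot>\<^sub>m 1\<^sub>m n) + 1\<^sub>m m * K') (0\<^sub>m m n * F' + 1\<^sub>m m * 1\<^sub>m m)"
    unfolding L1_def M_def by (rule mult_four_block_mat, insert cF' cK', auto)
  also have "\<dots> = four_block_mat (char_poly_matrix (F * K)) (0\<^sub>m n m) K' (1\<^sub>m m)"
  proof (rule cong_four_block_mat)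
    show "1\<^sub>m n * (?X \<cdot>\<^sub>m 1\<^sub>m n) + Fm * K' = char_poly_matrix (F * K)"
      unfolding FK1 char_poly_matrix_def using F K by simp
    show "1\<^sub>m n * F' + Fm * 1\<^sub>m m = 0\<^sub>m n m"
      using cF' F by (intro eq_matI) (auto simp: F'_def Fm_def)
    show "0\<^sub>m m n * (?X \<cdot>\<^sub>m 1\<^sub>m n) + 1\<^sub>m m * K' = K'" using cK' by simp
    show "0\<^sub>m m n * F' + 1\<^sub>m m * 1\<^sub>m m = 1\<^sub>m m" using cF' by simp
  qed
  finally have LM1: "L1 * M = four_block_mat (char_poly_matrix (F * K)) (0\<^sub>m n m) K' (1\<^sub>m m)" .
  have "det (L1 * M) = char_poly (F * K)"
    unfolding LM1 char_poly_def
    by (subst det_four_block_mat_upper_right_zero[of _ n _ m], insert F K cK', auto)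
  hence dM: "det M = char_poly (F * K)" using det_mult[OF cL1 cM] dL1 by simp
  have "L2 * M = four_block_mat (1\<^sub>m n * (?X \<cdot>\<^sub>m 1\<^sub>m n) + 0\<^sub>m n m * K') (1\<^sub>m n * F' + 0\<^sub>m n m * 1\<^sub>m m)
      (Km * (?X \<cdot>\<^sub>m 1\<^sub>m n) + (?X \<cdot>\<^sub>m 1\<^sub>m m) * K') (Km * F' + (?X \<cdot>\<^sub>m 1\<^sub>m m) * 1\<^sub>m m)"
    unfolding L2_def M_def by (rule mult_four_block_mat, insert cF' cK', auto)
  also have "\<dots> = four_block_mat (?X \<cdot>\<^sub>m 1\<^sub>m n) F' (0\<^sub>m m n) (char_poly_matrix (K * F))"
  proof (rule cong_four_block_mat)
    show "1\<^sub>m n * (?X \<cdot>\<^sub>m 1\<^sub>m n) + 0\<^sub>m n m * K' = ?X \<cdot>\<^sub>m 1\<^sub>m n" using cK' by simp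
    show "1\<^sub>m n * F' + 0\<^sub>m n m * 1\<^sub>m m = F'" using cF' by simp
    show "Km * (?X \<cdot>\<^sub>m 1\<^sub>m n) + (?X \<cdot>\<^sub>m 1\<^sub>m m) * K' = 0\<^sub>m m n"
      using cK' K by (intro eq_matI) (auto simp: K'_def Km_def)
    show "Km * F' + (?X \<cdot>\<^sub>m 1\<^sub>m m) * 1\<^sub>m m = char_poly_matrix (K * F)"
      unfolding KF1 char_poly_matrix_def using F K by (simp add: comm_add_mat[of _ m m])
  qed
  finally have LM2: "L2 * M = four_block_mat (?X \<cdot>\<^sub>m 1\<^sub>m n) F' (0\<^sub>m m n) (char_poly_matrix (K * F))" .
  have "det (L2 * M) = ?X ^ n * char_poly (K * F)"
    unfolding LM2 char_poly_def
    by (subst det_four_block_mat_lower_left_zero[of _ n _ m], insert F K cF', auto)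
  hence "?X ^ m * char_poly (F * K) = ?X ^ n * char_poly (K * F)"
    using det_mult[OF cL2 cM] dL2 dM by simp
  thus ?thesis .
qed


lemma pcompose_power_left': "pcompose (p ^ n) q = (pcompose p q) ^ n"
  by (induction n) (auto simp: pcompose_mult pcompose_1)

lemma char_poly_shift:
  fixes A :: "'a :: comm_ring_1 mat"
  assumes A: "A \<in> carrier_mat n n"
  shows "char_poly (A + b \<cdot>\<^sub>m 1\<^sub>m n) = pcompose (char_poly A) [:-b,1:]"
proof -
  have hh: "comm_ring_hom (\<lambda>p. pcompose p [:-b,1:])"
    by unfold_locales (auto simp: pcompose_add pcompose_mult pcompose_1)
  have "map_mat (\<lambda>p. pcompose p [:-b,1:]) (char_poly_matrix A) = char_poly_matrix (A + b \<cdot>\<^sub>m 1\<^sub>m n)"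
    using A by (intro eq_matI) (auto simp: char_poly_matrix_def pcompose_pCons)
  then show ?thesis unfolding char_poly_def comm_ring_hom.hom_det[OF hh, symmetric] by simp
qed

lemma char_poly_1x1:
  fixes A :: "'a :: comm_ring_1 mat"
  assumes A: "A \<in> carrier_mat 1 1"
  shows "char_poly A = [:- (A $$ (0,0)), 1:]"
proof -
  have "upper_triangular A" using A unfolding upper_triangular_def by auto
  from char_poly_upper_triangular[OF A this] show ?thesis using A by (simp add: diag_mat_def)
qed

lemma char_poly_allones:
  fixes a :: real
  assumes n: "n \<ge> 1"
  shows "char_poly (mat n n (\<lambda>_. a)) = [:0,1:]^(n-1) * [:-(a * real n), 1:]"
proof -
  define F where "F = mat n 1 (\<lambda>_. a)"
  define K where "K = mat 1 n (\<lambda>_. 1::real)"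
  have FK: "F * K = mat n n (\<lambda>_. a)"
    by (intro eq_matI) (auto simp: F_def K_def scalar_prod_def)
  have KF: "K * F = mat 1 1 (\<lambda>_. a * real n)"
    by (intro eq_matI) (auto simp: F_def K_def scalar_prod_def)
  have "[:0,1:]^1 * char_poly (F * K) = [:0,1:]^n * char_poly (K * F)"
    by (rule sylvester_char_poly) (auto simp: F_def K_def)
  also have "char_poly (K * F) = [:-(a * real n), 1:]"
    unfolding KF by (subst char_poly_1x1) auto
  also have "([:0,1:]::real poly)^n = [:0,1:] * [:0,1:]^(n-1)" using n
    by (metis One_nat_def Suc_pred' less_eq_Suc_le power_Suc)
  finally have "[:0,1:] * char_poly (F * K) = [:0,1:] * ([:0,1:]^(n-1) * [:-(a * real n), 1:])"
    by (simp add: mult.assoc)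
  hence "char_poly (F * K) = [:0,1:]^(n-1) * [:-(a * real n), 1:]"
    by (subst (asm) mult_left_cancel) auto
  thus ?thesis unfolding FK .
qed

lemma char_poly_aJ_b:
  fixes a b :: real
  assumes n: "n \<ge> 1"
  shows "char_poly (mat n n (\<lambda>_. a) + b \<cdot>\<^sub>m 1\<^sub>m n) = [:-b,1:]^(n-1) * [:-(a * real n + b), 1:]"
proof -
  have "char_poly (mat n n (\<lambda>_. a) + b \<cdot>\<^sub>m 1\<^sub>m n) = pcompose (char_poly (mat n n (\<lambda>_. a))) [:-b,1:]"
    by (rule char_poly_shift) auto
  also have "\<dots> = [:-b,1:]^(n-1) * [:-(a * real n + b), 1:]"
  proof -
    have e1: "pcompose [:0,1:] [:-b,1:] = [:-b,1::real:]" by (simp add: pcompose_pCons)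
    have e2: "pcompose [:-(a * real n), 1:] [:-b,1:] = [:-(a * real n + b), 1:]" by (simp add: pcompose_pCons)
    show ?thesis unfolding char_poly_allones[OF n] pcompose_mult pcompose_power_left' e1 e2 ..
  qed
  finally show ?thesis .
qed


lemma sum_div_block:
  fixes f :: "nat \<Rightarrow> 'a :: comm_semiring_1"
  assumes h: "h \<ge> 1"
  shows "(\<Sum>i<l*h. f (i div h)) = of_nat h * (\<Sum>g<l. f g)"
proof (induction l)
  case 0 then show ?case by simp
next
  case (Suc l)
  have U: "{..<Suc l * h} = {..<l*h} \<union> {l*h..<l*h+h}" by auto
  have "(\<Sum>i\<in>{l*h..<l*h+h}. f (i div h)) = (\<Sum>i\<in>{l*h..<l*h+h}. f l)"
  proof (rule sum.cong)
    fix i assume "i \<in> {l*h..<l*h+h}"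
    hence "i div h = l" using h
      by (metis atLeastLessThan_iff div_nat_eqI mult.commute add.commute mult_Suc_right)
    thus "f (i div h) = f l" by simp
  qed simp
  hence "(\<Sum>i<Suc l * h. f (i div h)) = (\<Sum>i<l*h. f (i div h)) + of_nat h * f l"
    unfolding U by (subst sum.union_disjoint) auto
  thus ?case using Suc by (simp add: distrib_left)
qed

definition Fm :: "nat \<Rightarrow> nat \<Rightarrow> real mat" where
  "Fm l h = mat (l*h) l (\<lambda>(i,g). if i div h = g then 1 else 0)"

definition Cm :: "nat \<Rightarrow> real \<Rightarrow> real \<Rightarrow> real mat" where
  "Cm l ph pl = mat l l (\<lambda>(g,k). if g = k then ph else pl)"

lemma div_lt: "(i::nat) < l * h \<Longrightarrow> i div h < l"
  by (rule less_mult_imp_div_less)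

lemma FC: assumes h: "h \<ge> 1"
  shows "Fm l h * Cm l ph pl = mat (l*h) l (\<lambda>(i,k). if i div h = k then ph else pl)"
proof (rule eq_matI)
  fix i k assume i: "i < dim_row (mat (l*h) l (\<lambda>(i,k). if i div h = k then ph else pl))"
    and k: "k < dim_col (mat (l*h) l (\<lambda>(i,k). if i div h = k then ph else pl))"
  hence i: "i < l*h" and k: "k < l" by auto
  have "(Fm l h * Cm l ph pl) $$ (i,k) = (\<Sum>g\<in>{0..<l}. (if i div h = g then 1 else 0) * (if g = k then ph else pl))"
    using i k by (simp add: Fm_def Cm_def scalar_prod_def)
  also have "\<dots> = (if i div h = k then ph else pl)"
    using div_lt[OF i] by (simp add: if_distrib[of "\<lambda>x. x * _"] sum.delta cong: if_cong)
  finally show "(Fm l h * Cm l ph pl) $$ (i,k) = mat (l*h) l (\<lambda>(i,k). if i div h = k then ph else pl) $$ (i,k)"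
    using i k by simp
qed (auto simp: Fm_def Cm_def)

lemma hrg_factor: assumes h: "h \<ge> 1"
  shows "hrg_matrix l h ph pl = Fm l h * Cm l ph pl * transpose_mat (Fm l h)"
proof (rule eq_matI)
  fix i j assume "i < dim_row (Fm l h * Cm l ph pl * transpose_mat (Fm l h))"
    "j < dim_col (Fm l h * Cm l ph pl * transpose_mat (Fm l h))"
  hence i: "i < l*h" and j: "j < l*h" by (auto simp: Fm_def)
  have "(Fm l h * Cm l ph pl * transpose_mat (Fm l h)) $$ (i,j) =
     (\<Sum>k\<in>{0..<l}. (if i div h = k then ph else pl) * (if j div h = k then 1 else 0))"
    using i j unfolding FC[OF h] by (simp add: Fm_def scalar_prod_def)
  also have "\<dots> = (if i div h = j div h then ph else pl)"
    using div_lt[OF j] by (simp add: if_distrib[of "\<lambda>x. _ * x"] sum.delta cong: if_cong)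
  finally show "hrg_matrix l h ph pl $$ (i,j) = (Fm l h * Cm l ph pl * transpose_mat (Fm l h)) $$ (i,j)"
    using i j by (simp add: hrg_matrix_def)
qed (auto simp: Fm_def hrg_matrix_def)

lemma FtF: assumes h: "h \<ge> 1"
  shows "transpose_mat (Fm l h) * Fm l h = real h \<cdot>\<^sub>m 1\<^sub>m l"
proof (rule eq_matI)
  fix g k assume "g < dim_row (real h \<cdot>\<^sub>m 1\<^sub>m l)" "k < dim_col (real h \<cdot>\<^sub>m 1\<^sub>m l)"
  hence g: "g < l" and k: "k < l" by auto
  have "(transpose_mat (Fm l h) * Fm l h) $$ (g,k) =
      (\<Sum>i<l*h. (\<lambda>q. (if q = g then 1 else 0) * (if q = k then 1 else (0::real))) (i div h))"
    using g k by (simp add: Fm_def scalar_prod_def atLeast0LessThan)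
  also have "\<dots> = real h * (\<Sum>q<l. (if q = g then 1 else 0) * (if q = k then 1 else 0))"
    by (rule sum_div_block[OF h])
  also have "\<dots> = real h * (if g = k then 1 else 0)"
    using g by (simp add: if_distrib[of "\<lambda>x. x * _"] sum.delta cong: if_cong)
  finally show "(transpose_mat (Fm l h) * Fm l h) $$ (g,k) = (real h \<cdot>\<^sub>m 1\<^sub>m l) $$ (g,k)"
    using g k by simp
qed (auto simp: Fm_def)

lemma CC: "Cm l ph pl * Cm l ph pl =
   mat l l (\<lambda>_. real l * pl^2 + 2 * pl * (ph - pl)) + (ph - pl)^2 \<cdot>\<^sub>m 1\<^sub>m l"
proof (rule eq_matI)
  fix g k assume "g < dim_row (mat l l (\<lambda>_. real l * pl^2 + 2 * pl * (ph - pl)) + (ph - pl)^2 \<cdot>\<^sub>m 1\<^sub>m l)"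
    "k < dim_col (mat l l (\<lambda>_. real l * pl^2 + 2 * pl * (ph - pl)) + (ph - pl)^2 \<cdot>\<^sub>m 1\<^sub>m l)"
  hence g: "g < l" and k: "k < l" by auto
  define d where "d = ph - pl"
  have e: "\<And>g q. (if g = q then ph else pl) = pl + (if g = q then d else 0)" by (simp add: d_def)
  have "(Cm l ph pl * Cm l ph pl) $$ (g,k) = (\<Sum>q\<in>{0..<l}. (if g = q then ph else pl) * (if q = k then ph else pl))"
    using g k by (simp add: Cm_def scalar_prod_def)
  also have "\<dots> = (\<Sum>q\<in>{0..<l}. pl*pl + pl * (if q = k then d else 0) + (if g = q then d else 0) * pl
       + (if g = q then d else 0) * (if q = k then d else 0))"
    unfolding e by (rule sum.cong) (auto simp: algebra_simps)
  also have "\<dots> = real l * pl^2 + 2 * pl * d + (if g = k then d^2 else 0)"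
    using g k by (simp add: sum.distrib if_distrib[of "\<lambda>x. x * _"] if_distrib[of "\<lambda>x. _ * x"] sum.delta
        power2_eq_square cong: if_cong)
  finally show "(Cm l ph pl * Cm l ph pl) $$ (g,k) = (mat l l (\<lambda>_. real l * pl^2 + 2 * pl * (ph - pl)) + (ph - pl)^2 \<cdot>\<^sub>m 1\<^sub>m l) $$ (g,k)"
    using g k by (simp add: d_def)
qed (auto simp: Cm_def)


lemma hrg_sym: "transpose_mat (hrg_matrix l h ph pl) = hrg_matrix l h ph pl"
  by (intro eq_matI) (auto simp: hrg_matrix_def)

lemma cp_hrg:
  fixes ph pl :: real and l h :: nat
  assumes l: "l \<ge> 1" and h: "h \<ge> 1"
  defines "d \<equiv> ph - pl"
  defines "a \<equiv> real h ^ 2 * (real l * pl^2 + 2 * pl * d)"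
  defines "b \<equiv> real h ^ 2 * d ^ 2"
  shows "char_poly (transpose_mat (hrg_matrix l h ph pl) * hrg_matrix l h ph pl)
     = [:0,1:]^(l*h - l) * ([:-b,1:]^(l-1) * [:-(a * real l + b),1:])"
proof -
  define F where "F = Fm l h"
  define C where "C = Cm l ph pl"
  define FT where "FT = transpose_mat F"
  have cF: "F \<in> carrier_mat (l*h) l" by (simp add: F_def Fm_def)
  have cC: "C \<in> carrier_mat l l" by (simp add: C_def Cm_def)
  have cFT: "FT \<in> carrier_mat l (l*h)" by (simp add: FT_def F_def Fm_def)
  have FTF: "FT * F = real h \<cdot>\<^sub>m 1\<^sub>m l" unfolding FT_def F_def by (rule FtF[OF h])
  define K where "K = real h \<cdot>\<^sub>m (C * C * FT)"
  have cK: "K \<in> carrier_mat l (l*h)" using cC cFT by (simp add: K_def)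
  have H: "hrg_matrix l h ph pl = F * C * FT" unfolding F_def C_def FT_def by (rule hrg_factor[OF h])
  have cCFT: "C * FT \<in> carrier_mat l (l*h)" using cC cFT by simp
  have cFCFT: "F * (C * FT) \<in> carrier_mat (l*h) (l*h)" using cF cCFT by simp
  have "F * C * FT * (F * C * FT) = F * (C * FT) * (F * (C * FT))"
    using assoc_mult_mat[OF cF cC cFT] by simp
  also have "\<dots> = F * ((C * FT) * (F * (C * FT)))" by (rule assoc_mult_mat[OF cF cCFT cFCFT])
  also have "(C * FT) * (F * (C * FT)) = C * (FT * (F * (C * FT)))"
    by (rule assoc_mult_mat[OF cC cFT cFCFT])
  also have "FT * (F * (C * FT)) = (FT * F) * (C * FT)"
    by (rule assoc_mult_mat[OF cFT cF cCFT, symmetric])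
  also have "C * ((FT * F) * (C * FT)) = K"
  proof -
    have "C * ((FT * F) * (C * FT)) = C * (real h \<cdot>\<^sub>m (C * FT))"
      unfolding FTF using mult_smult_assoc_mat[OF one_carrier_mat cCFT] left_mult_one_mat[OF cCFT] by simp
    also have "\<dots> = real h \<cdot>\<^sub>m (C * (C * FT))" using cC cCFT by (simp add: mult_smult_distrib)
    also have "C * (C * FT) = C * C * FT" by (rule assoc_mult_mat[OF cC cC cFT, symmetric])
    finally show ?thesis unfolding K_def .
  qed
  finally have HH: "transpose_mat (hrg_matrix l h ph pl) * hrg_matrix l h ph pl = F * K"
    unfolding hrg_sym unfolding H .
  have cCC: "C * C \<in> carrier_mat l l" using cC by simp
  have cCCFT: "C * C * FT \<in> carrier_mat l (l*h)" using cCC cFT by simp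
  have "K * F = real h \<cdot>\<^sub>m (C * C * (FT * F))"
    unfolding K_def using mult_smult_assoc_mat[OF cCCFT cF] assoc_mult_mat[OF cCC cFT cF] by simp
  also have "\<dots> = (real h ^ 2) \<cdot>\<^sub>m (C * C)"
    unfolding FTF using mult_smult_distrib[OF cCC one_carrier_mat] right_mult_one_mat[OF cCC]
    by (simp add: power2_eq_square, intro eq_matI, auto)
  also have "\<dots> = mat l l (\<lambda>_. a) + b \<cdot>\<^sub>m 1\<^sub>m l"
    unfolding C_def CC by (intro eq_matI) (auto simp: a_def b_def d_def algebra_simps)
  finally have KF: "K * F = mat l l (\<lambda>_. a) + b \<cdot>\<^sub>m 1\<^sub>m l" .
  have "[:0,1:]^l * char_poly (F * K) = [:0,1:]^(l*h) * char_poly (K * F)"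
    by (rule sylvester_char_poly[OF cF cK])
  also have "char_poly (K * F) = [:-b,1:]^(l-1) * [:-(a * real l + b),1:]"
    unfolding KF by (rule char_poly_aJ_b[OF l])
  also have "([:0,1:] :: real poly)^(l*h) = [:0,1:]^l * [:0,1:]^(l*h - l)"
    using h by (simp add: power_add[symmetric])
  finally have "[:0,1:]^l * char_poly (F * K) = [:0,1:]^l * ([:0,1:]^(l*h - l) * ([:-b,1:]^(l-1) * [:-(a * real l + b),1:]))"
    by (simp add: mult.assoc)
  hence "char_poly (F * K) = [:0,1:]^(l*h - l) * ([:-b,1:]^(l-1) * [:-(a * real l + b),1:])"
    by (subst (asm) mult_left_cancel) auto
  thus ?thesis unfolding HH .
qed


lemma sv_hrg:
  fixes ph pl :: real and l h :: nat
  assumes l: "l \<ge> 1" and h: "h \<ge> 1" and p: "pl \<le> ph" "0 \<le> pl"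
  shows "singular_values (hrg_matrix l h ph pl) =
     (pl * real (l*h) + real h * (ph - pl)) # replicate (l-1) (real h * (ph - pl)) @ replicate (l*h - l) 0"
proof -
  define d where "d = ph - pl"
  define a where "a = real h ^ 2 * (real l * pl^2 + 2 * pl * d)"
  define b where "b = real h ^ 2 * d ^ 2"
  define lam where "lam = a * real l + b"
  have d0: "d \<ge> 0" using p by (simp add: d_def)
  have a0: "a \<ge> 0" using p d0 by (simp add: a_def)
  have b0: "b \<ge> 0" by (simp add: b_def)
  have blam: "b \<le> lam" using a0 by (simp add: lam_def)
  have lamsq: "lam = (pl * real (l*h) + real h * d)^2"
    by (simp add: lam_def a_def b_def power2_eq_square algebra_simps)
  have cp: "char_poly (transpose_mat (hrg_matrix l h ph pl) * hrg_matrix l h ph pl)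
     = [:0,1:]^(l*h - l) * ([:-b,1:]^(l-1) * [:-lam,1:])"
    using cp_hrg[OF l h, of ph pl] unfolding a_def b_def d_def lam_def .
  have pr: "proots ([:0,1:]^(l*h - l) * ([:-b,1:]^(l-1) * [:-lam,1:]) :: real poly)
     = mset (replicate (l*h - l) 0 @ replicate (l-1) b @ [lam])"
  proof -
    have n1: "([:0,1:] :: real poly)^(l*h - l) \<noteq> 0" by simp
    have n2: "([:-b,1:] :: real poly)^(l-1) \<noteq> 0" by simp
    have n3: "([:-lam,1:] :: real poly) \<noteq> 0" by simp
    have n23: "([:-b,1:] :: real poly)^(l-1) * [:-lam,1:] \<noteq> 0" using n2 n3 by (rule no_zero_divisors)
    have r: "\<And>n x. repeat_mset n {#x#} = replicate_mset n x"
      by (induct_tac n) auto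
    show ?thesis
      unfolding proots_mult[OF n1 n23] proots_mult[OF n2 n3] proots_power
      using proots_linear_factor[of "0::real"] proots_linear_factor[of "-b"] proots_linear_factor[of "-lam"]
      by (simp add: r)
  qed
  have so: "sorted (replicate (l*h - l) 0 @ replicate (l-1) b @ [lam])"
    using b0 blam by (auto simp: sorted_append)
  have sq1: "sqrt lam = pl * real (l*h) + real h * d"
    unfolding lamsq using p d0 by simp
  have sq2: "sqrt b = real h * d" unfolding b_def using d0 by (simp add: real_sqrt_mult)
  show ?thesis
    unfolding singular_values_def cp pr sorted_list_of_multiset_mset sorted_sort_id[OF so]
    by (simp add: sq1 sq2 d_def)
qed

lemma entry_sum_hrg:
  fixes ph pl :: real and l h :: nat
  assumes l: "l \<ge> 1" and h: "h \<ge> 1"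
  shows "entry_sum (hrg_matrix l h ph pl) = real (l*h) * (pl * real (l*h) + real h * (ph - pl))"
proof -
  have inner: "(\<Sum>k<l. if g = k then ph else pl) = real l * pl + (ph - pl)" if g: "g < l" for g
  proof -
    have "(\<Sum>k<l. if g = k then ph else pl) = (\<Sum>k<l. pl + (if g = k then ph - pl else 0))"
      by (rule sum.cong) auto
    also have "\<dots> = real l * pl + (ph - pl)" using g by (simp add: sum.distrib)
    finally show ?thesis .
  qed
  have "entry_sum (hrg_matrix l h ph pl) =
     (\<Sum>i<l*h. (\<lambda>g. \<Sum>j<l*h. (\<lambda>k. if g = k then ph else pl) (j div h)) (i div h))"
    by (simp add: entry_sum_def hrg_matrix_def)
  also have "\<dots> = real h * (\<Sum>g<l. \<Sum>j<l*h. (\<lambda>k. if g = k then ph else pl) (j div h))"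
    by (rule sum_div_block[OF h])
  also have "\<dots> = real h * (\<Sum>g<l. real h * (\<Sum>k<l. if g = k then ph else pl))"
    by (intro arg_cong[where f="\<lambda>x. real h * x"] sum.cong refl, rule sum_div_block[OF h])
  also have "\<dots> = real h * (\<Sum>g<l. real h * (real l * pl + (ph - pl)))"
    using inner by simp
  also have "\<dots> = real (l*h) * (pl * real (l*h) + real h * (ph - pl))"
    by (simp add: algebra_simps)
  finally show ?thesis .
qed

theorem theorem4p2:
  fixes s_l s_h :: nat and p_h p_l p_h' p_l' :: real and t :: nat
  assumes "s_l \<ge> 1" and "s_h \<ge> 1"
    and "p_h \<ge> p_l" and "p_l \<ge> 0"
    and "p_h' \<ge> p_l'" and "p_l' \<ge> 0"
    and "entry_sum (hrg_matrix s_l s_h p_h p_l) = 1"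
    and "entry_sum (hrg_matrix s_l s_h p_h' p_l') = 1"
    and "p_h - p_l \<le> p_h' - p_l'"
    and "1 \<le> t" and "t \<le> s_l * s_h"
  shows "sigma (hrg_matrix s_l s_h p_h p_l) t \<le> sigma (hrg_matrix s_l s_h p_h' p_l') t"
proof -
  define N where "N = s_l * s_h"
  have Npos: "real N > 0" using assms(1,2) by (simp add: N_def)
  have e1: "real N * (p_l * real N + real s_h * (p_h - p_l)) = 1"
    using assms(7) entry_sum_hrg[OF assms(1,2)] by (simp add: N_def)
  have e2: "real N * (p_l' * real N + real s_h * (p_h' - p_l')) = 1"
    using assms(8) entry_sum_hrg[OF assms(1,2)] by (simp add: N_def)
  have top: "p_l * real N + real s_h * (p_h - p_l) = p_l' * real N + real s_h * (p_h' - p_l')"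
    using e1 e2 Npos by (metis mult_left_cancel less_irrefl)
  have mono: "real s_h * (p_h - p_l) \<le> real s_h * (p_h' - p_l')"
    using assms(9) by (simp add: mult_left_mono)
  note sv1 = sv_hrg[OF assms(1,2,3,4)] and sv2 = sv_hrg[OF assms(1,2,5,6)]
  show ?thesis
  proof (cases "t = 1")
    case True
    then show ?thesis unfolding sigma_def sv1 sv2 using top by (simp add: N_def)
  next
    case False
    hence t: "t - 1 = Suc (t - 2)" using assms(10) by simp
    show ?thesis
    proof (cases "t - 2 < s_l - 1")
      case True
      then show ?thesis unfolding sigma_def sv1 sv2 t using mono by (simp add: nth_append)
    next
      case False
      then show ?thesis unfolding sigma_def sv1 sv2 t using mono assms(11)
        by (simp add: nth_append)
    qed
  qed
qed

end
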